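(* For any choice of eigenbases $B_g$ ($g\in G$) used to define $\Upsilon$, the composite $\Phi^*\Upsilon:C^p\to C^p$ is the identity map for every $p\ge0$.
   Context: Let $G$ be a finite group acting linearly on a complex vector space $V$ of dimension $n$, $v\mapsto{}^gv$, and on $V^*$, $S(V)$, $\bigwedge V^*$ accordingly. $S(V)\#G$ is $S(V)\otimes\mathbb C G$ with product $(a\otimes g)(b\otimes h)=a\,{}^gb\otimes gh$. Let $C^p=S(V)\otimes\bigwedge^pV^*\otimes\mathbb C[G]$, identified with $\operatorname{Hom}_{\mathbb C}(\bigwedge^pV,S(V)\#G)$ (for $f\otimes\omega\otimes g$, $u\mapsto \omega(u)f\otimes g$). $\Phi^*:\operatorname{Hom}_{\mathbb C}(S(V)^{\otimes p},S(V)\#G)\to C^p$ is given by $(\Phi^*F)(u_1\wedge\cdots\wedge u_p)=\sum_{\pi\in\mathrm{Sym}_p}\operatorname{sgn}(\pi)F(u_{\pi(1)}\otimes\cdots\otimes u_{\pi(p)})$ for $u_i\in V$. The map $\Upsilon:C^p\to\operatorname{Hom}_{\mathbb C}(S(V)^{\otimes p},S(V)\#G)$ is defined as follows. For each $g\in G$ fix a basis $B_g=\{v_1,\dots,v_n\}$ of $V$ of eigenvectors of $g$, ${}^gv_i=\epsilon_iv_i$, with dual basis $v_1^*,\dots,v_n^*$; let $s_i\in GL(V)$ be the diagonal map (in this basis) $v_i\mapsto\epsilon_iv_i$, $v_j\mapsto v_j$ ($j\ne i$), so $g=s_1\cdots s_n$. Let $\partial_i:S(V)\to S(V)$ be the ordinary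 partial derivative $\partial/\partial v_i$ if $\epsilon_i=1$ and $\partial_i(f)=(f-{}^{s_i}f)/(v_i-{}^{s_i}v_i)$ if $\epsilon_i\ne1$. For $\alpha=f_g\otimes v_{j_1}^*\wedge\cdots\wedge v_{j_p}^*\otimes g$ with $j_1<\cdots<j_p$, set $\Upsilon(\alpha)(f_1\otimes\cdots\otimes f_p)=\Big(\prod_{k=1}^p{}^{s_1s_2\cdots s_{j_k-1}}(\partial_{j_k}f_k)\Big)f_g\otimes g$, and extend linearly. *)

theory Defs
  imports "HOL-Analysis.Analysis" "HOL-Combinatorics.Permutations"
begin

(* V = complex^'n (column vectors), G acts by matrices g *v v.
   V^* is modelled by complex^'n as well (row vectors xi, pairing xi(v) = sum_i xi$i * v$i).
   S(V) is modelled as the algebra of polynomial functions on V^* (faithful since C is infinite):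
   an element v of V is the linear function lin v. *)

definition lin :: "complex^'n \<Rightarrow> (complex^'n \<Rightarrow> complex)" where
  "lin v = (\<lambda>\<xi>. \<Sum>i\<in>UNIV. \<xi>$i * v$i)"

inductive_set SV :: "(complex^'n \<Rightarrow> complex) set" where
  SV_const: "(\<lambda>_. c) \<in> SV"
| SV_lin: "lin v \<in> SV"
| SV_add: "f \<in> SV \<Longrightarrow> g \<in> SV \<Longrightarrow> (\<lambda>\<xi>. f \<xi> + g \<xi>) \<in> SV"
| SV_mult: "f \<in> SV \<Longrightarrow> g \<in> SV \<Longrightarrow> (\<lambda>\<xi>. f \<xi> * g \<xi>) \<in> SV"

text \<open>Action of a linear map (matrix) on S(V): the algebra automorphism with act g (lin v) = lin (g *v v).\<close>
definition act :: "complex^'n^'n \<Rightarrow> (complex^'n \<Rightarrow> complex) \<Rightarrow> (complex^'n \<Rightarrow> complex)" where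
  "act g f = (\<lambda>\<xi>. f (\<xi> v* g))"

text \<open>Eigenbasis data: b g i (i < n, 0-based) is the basis B_g, eps g i the eigenvalues.
  dualc b g i is the dual basis functional v_i^* of B_g.\<close>
definition dualc :: "(complex^'n^'n \<Rightarrow> nat \<Rightarrow> complex^'n) \<Rightarrow> complex^'n^'n \<Rightarrow> nat \<Rightarrow> complex^'n \<Rightarrow> complex" where
  "dualc b g i u = vec.representation (b g ` {..<CARD('n)}) u (b g i)"

definition dualvec :: "(complex^'n^'n \<Rightarrow> nat \<Rightarrow> complex^'n) \<Rightarrow> complex^'n^'n \<Rightarrow> nat \<Rightarrow> complex^'n" where
  "dualvec b g i = (\<chi> k. dualc b g i (axis k 1))"

definition smap :: "(complex^'n^'n \<Rightarrow> nat \<Rightarrow> complex^'n) \<Rightarrow> (complex^'n^'n \<Rightarrow> nat \<Rightarrow> complex)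
    \<Rightarrow> complex^'n^'n \<Rightarrow> nat \<Rightarrow> complex^'n^'n" where
  "smap b eps g i = matrix (\<lambda>u. u + ((eps g i - 1) * dualc b g i u) *s b g i)"

text \<open>prefix b eps g j = s_0 s_1 ... s_(j-1) (0-based; = s_1 ... s_(j-1) in the paper's 1-based indexing of s_j).\<close>
definition prefix :: "(complex^'n^'n \<Rightarrow> nat \<Rightarrow> complex^'n) \<Rightarrow> (complex^'n^'n \<Rightarrow> nat \<Rightarrow> complex)
    \<Rightarrow> complex^'n^'n \<Rightarrow> nat \<Rightarrow> complex^'n^'n" where
  "prefix b eps g j = foldr (\<lambda>k M. smap b eps g k ** M) [0..<j] (mat 1)"

text \<open>The operator partial_i: ordinary partial derivative w.r.t. v_i if eps_i = 1, otherwise the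
  divided difference (f - s_i f)/(v_i - s_i v_i), taken as the (unique) polynomial quotient.\<close>
definition dpart :: "(complex^'n^'n \<Rightarrow> nat \<Rightarrow> complex^'n) \<Rightarrow> (complex^'n^'n \<Rightarrow> nat \<Rightarrow> complex)
    \<Rightarrow> complex^'n^'n \<Rightarrow> nat \<Rightarrow> (complex^'n \<Rightarrow> complex) \<Rightarrow> (complex^'n \<Rightarrow> complex)" where
  "dpart b eps g i f =
     (if eps g i = 1 then (\<lambda>\<xi>. deriv (\<lambda>t. f (\<xi> + t *s dualvec b g i)) 0)
      else (THE q. q \<in> SV \<and>
              (\<forall>\<xi>. q \<xi> * (lin (b g i) \<xi> - act (smap b eps g i) (lin (b g i)) \<xi>)
                     = f \<xi> - act (smap b eps g i) f \<xi>)))"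

text \<open>An element alpha of C^p is given by its coefficients: alpha = sum_(g in G) sum_J c g J \<otimes> v_J^* \<otimes> g,
  where J ranges over p-element subsets of {0..<n} (v_J^* taken w.r.t. B_g).
  An element of S(V)#G is a function G \<rightarrow> S(V) (zero outside G).\<close>
definition Upsilon :: "(complex^'n^'n \<Rightarrow> nat \<Rightarrow> complex^'n) \<Rightarrow> (complex^'n^'n \<Rightarrow> nat \<Rightarrow> complex)
    \<Rightarrow> (complex^'n^'n) set \<Rightarrow> (complex^'n^'n \<Rightarrow> nat set \<Rightarrow> (complex^'n \<Rightarrow> complex)) \<Rightarrow> nat
    \<Rightarrow> (nat \<Rightarrow> (complex^'n \<Rightarrow> complex)) \<Rightarrow> complex^'n^'n \<Rightarrow> (complex^'n \<Rightarrow> complex)" where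
  "Upsilon b eps G c p fs = (\<lambda>h. if h \<in> G then
      (\<lambda>\<xi>. \<Sum>J\<in>{J. J \<subseteq> {..<CARD('n)} \<and> card J = p}.
         (\<Prod>k<p. act (prefix b eps h (sorted_list_of_set J ! k))
                    (dpart b eps h (sorted_list_of_set J ! k) (fs k)) \<xi>) * c h J \<xi>)
    else (\<lambda>_. 0))"

definition PhiStar :: "nat \<Rightarrow> ((nat \<Rightarrow> (complex^'n \<Rightarrow> complex)) \<Rightarrow> complex^'n^'n \<Rightarrow> (complex^'n \<Rightarrow> complex))
    \<Rightarrow> (nat \<Rightarrow> complex^'n) \<Rightarrow> complex^'n^'n \<Rightarrow> (complex^'n \<Rightarrow> complex)" where
  "PhiStar p F us = (\<lambda>h \<xi>. \<Sum>\<pi>\<in>{\<pi>. \<pi> permutes {..<p}}.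
        (sign \<pi> :: complex) * F (\<lambda>k. lin (us (\<pi> k))) h \<xi>)"

text \<open>alpha viewed in Hom(\<And>^p V, S(V)#G): u_0 \<and>...\<and> u_(p-1) \<mapsto> sum_g sum_J det[v_(j_k)^*(u_l)] c g J \<otimes> g.\<close>
definition alpha_eval :: "(complex^'n^'n \<Rightarrow> nat \<Rightarrow> complex^'n) \<Rightarrow> (complex^'n^'n) set
    \<Rightarrow> (complex^'n^'n \<Rightarrow> nat set \<Rightarrow> (complex^'n \<Rightarrow> complex)) \<Rightarrow> nat
    \<Rightarrow> (nat \<Rightarrow> complex^'n) \<Rightarrow> complex^'n^'n \<Rightarrow> (complex^'n \<Rightarrow> complex)" where
  "alpha_eval b G c p us = (\<lambda>h. if h \<in> G then
      (\<lambda>\<xi>. \<Sum>J\<in>{J. J \<subseteq> {..<CARD('n)} \<and> card J = p}.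
         (\<Sum>\<sigma>\<in>{\<sigma>. \<sigma> permutes {..<p}}. (sign \<sigma> :: complex) *
             (\<Prod>k<p. dualc b h (sorted_list_of_set J ! k) (us (\<sigma> k)))) * c h J \<xi>)
    else (\<lambda>_. 0))"

end

theory Submission
  imports Defs
begin

lemma span_basis:
  fixes bb :: "nat \<Rightarrow> complex^'n"
  assumes "inj_on bb {..<CARD('n)}" "vec.independent (bb ` {..<CARD('n)})"
  shows "vec.span (bb ` {..<CARD('n)}) = UNIV"
proof -
  have "card (bb ` {..<CARD('n)}) = vec.dim (UNIV::(complex^'n) set)"
    using assms(1) by (simp add: card_image card_cart_basis)
  then have "UNIV \<subseteq> vec.span (bb ` {..<CARD('n)})"
    using vec.card_eq_dim[of "bb ` {..<CARD('n)}" UNIV] assms(2) by auto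
  then show ?thesis by auto
qed

locale bas =
  fixes b :: "complex^'n^'n \<Rightarrow> nat \<Rightarrow> complex^'n" and g :: "complex^'n^'n"
  assumes inj: "inj_on (b g) {..<CARD('n)}" and ind: "vec.independent (b g ` {..<CARD('n)})"
begin

lemma sp: "vec.span (b g ` {..<CARD('n)}) = UNIV"
  using span_basis[OF inj ind] .

lemma dualc_add: "dualc b g i (u + v) = dualc b g i u + dualc b g i v"
  unfolding dualc_def using vec.representation_add[OF ind] sp by auto

lemma dualc_scale: "dualc b g i (r *s u) = r * dualc b g i u"
  unfolding dualc_def using vec.representation_scale[OF ind] sp by auto

lemma dualc_sum: "dualc b g i (sum f A) = (\<Sum>a\<in>A. dualc b g i (f a))"
proof -
  have "vec.representation (b g ` {..<CARD('n)}) (sum f A) = (\<lambda>x. \<Sum>a\<in>A. vec.representation (b g ` {..<CARD('n)}) (f a) x)"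
    by (rule vec.representation_sum[OF ind]) (simp add: sp)
  then show ?thesis unfolding dualc_def by simp
qed

lemma dualc_self: "i < CARD('n) \<Longrightarrow> dualc b g i (b g i) = 1"
  unfolding dualc_def using vec.representation_basis[OF ind] by auto

lemma lin_dualvec: "lin u (dualvec b g i) = dualc b g i u"
proof -
  have "dualc b g i u = dualc b g i (\<Sum>k\<in>UNIV. (u$k) *s axis k 1)"
    by (simp add: basis_expansion)
  also have "\<dots> = (\<Sum>k\<in>UNIV. u$k * dualc b g i (axis k 1))"
    by (simp add: dualc_sum dualc_scale)
  finally show ?thesis unfolding lin_def dualvec_def by (simp add: mult.commute)
qed

lemma smap_lin: "Vector_Spaces.linear (*s) (*s) (\<lambda>u. u + ((eps g i - 1) * dualc b g i u) *s b g i)"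
  unfolding Vector_Spaces.linear_iff
proof (intro conjI allI)
  show "vector_space ((*s) :: complex \<Rightarrow> complex^'n \<Rightarrow> _)" by (rule vec.vector_space_axioms)
  show "vector_space ((*s) :: complex \<Rightarrow> complex^'n \<Rightarrow> _)" by (rule vec.vector_space_axioms)
  fix x y :: "complex^'n" and c :: complex
  show "x + y + ((eps g i - 1) * dualc b g i (x + y)) *s b g i =
      x + ((eps g i - 1) * dualc b g i x) *s b g i + (y + ((eps g i - 1) * dualc b g i y) *s b g i)"
    unfolding dualc_add by (simp add: vector_sadd_rdistrib distrib_left)
  show "c *s x + ((eps g i - 1) * dualc b g i (c *s x)) *s b g i = c *s (x + ((eps g i - 1) * dualc b g i x) *s b g i)"
    unfolding dualc_scale by (simp add: vector_add_ldistrib vector_smult_assoc mult_ac)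
qed

lemma smap_apply: "smap b eps g i *v u = u + ((eps g i - 1) * dualc b g i u) *s b g i"
  unfolding smap_def by (rule matrix_works[OF smap_lin])

end

lemma act_lin: "act M (lin v) = lin (M *v v)"
  unfolding act_def lin_def
  by (auto simp: vector_matrix_mult_def matrix_vector_mult_def sum_distrib_left sum_distrib_right
      intro!: ext sum.swap[THEN trans] sum.cong simp: mult_ac)

lemma lin_add: "lin (u + v) \<xi> = lin u \<xi> + lin v \<xi>"
  unfolding lin_def by (simp add: distrib_left sum.distrib)
lemma lin_scale: "lin (r *s u) \<xi> = r * lin u \<xi>"
  unfolding lin_def by (simp add: sum_distrib_left mult_ac)
lemma lin_argadd: "lin u (\<xi> + t *s d) = lin u \<xi> + t * lin u d"
  unfolding lin_def by (simp add: ring_distribs sum.distrib sum_distrib_left mult_ac)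

lemma SV_cont: "f \<in> SV \<Longrightarrow> continuous_on UNIV f"
  by (induction rule: SV.induct) (auto simp: lin_def intro!: continuous_intros)


lemma lin_axis: "lin v (axis k 1) = v $ k"
proof -
  have "lin v (axis k 1) = (\<Sum>i\<in>UNIV. if i = k then v$i else 0)"
    unfolding lin_def by (intro sum.cong) (auto simp: axis_def)
  then show ?thesis by simp
qed

lemma uniq_SV:
  fixes v :: "complex^'n"
  assumes q: "q \<in> SV" and v: "v \<noteq> 0" and h: "\<forall>\<xi>. (q \<xi> - d) * lin v \<xi> = 0"
  shows "q = (\<lambda>_. d)"
proof
  fix \<xi> :: "complex^'n"
  obtain k where k: "v $ k \<noteq> 0" using v by (metis vec_eq_iff zero_index)
  define w :: "complex^'n" where "w = axis k 1"
  have lv: "lin v (\<xi> + t *s w) = lin v \<xi> + t * v $ k" for t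
    unfolding w_def lin_argadd lin_axis ..
  have cq: "isCont q x" for x
    using SV_cont[OF q] continuous_on_eq_continuous_at[OF open_UNIV] by blast
  have t1: "((\<lambda>t. q (\<xi> + t *s w)) \<longlongrightarrow> q \<xi>) (at (0::complex))"
  proof -
    have e1: "(\<lambda>t. \<xi> + t *s w) = (\<lambda>t. \<xi> + (\<chi> j. t * w $ j))" by (rule ext) (simp add: vec_eq_iff)
    have e2: "\<xi> + (\<chi> j. (0::complex) * w $ j) = \<xi>" by (simp add: vec_eq_iff)
    have "((\<lambda>t. \<xi> + (\<chi> j. t * w $ j)) \<longlongrightarrow> \<xi> + (\<chi> j. (0::complex) * w $ j)) (at (0::complex))"
      by (intro tendsto_intros)
    then have "((\<lambda>t. \<xi> + t *s w) \<longlongrightarrow> \<xi>) (at (0::complex))" unfolding e1 e2 .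
    then show ?thesis using isCont_tendsto_compose[OF cq] by blast
  qed
  define d0 where "d0 = (if lin v \<xi> = 0 then 1 else norm (lin v \<xi> / v $ k))"
  have d0: "d0 > 0" unfolding d0_def using k by auto
  have ev: "eventually (\<lambda>t. q (\<xi> + t *s w) = d) (at (0::complex))"
    unfolding eventually_at
  proof (intro exI[of _ d0] conjI d0 ballI impI)
    fix t :: complex assume t: "t \<noteq> 0 \<and> dist t 0 < d0"
    have "lin v \<xi> + t * v $ k \<noteq> 0"
    proof
      assume z: "lin v \<xi> + t * v $ k = 0"
      show False
      proof (cases "lin v \<xi> = 0")
        case True then show False using z t k by simp
      next
        case False
        then have "t = - (lin v \<xi> / v $ k)" using z k by (simp add: field_simps add_eq_0_iff)
        then have "norm t = d0" unfolding d0_def using False by (simp add: norm_minus_cancel)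
        then show False using t by simp
      qed
    qed
    then show "q (\<xi> + t *s w) = d" using h[rule_format, of "\<xi> + t *s w"] lv[of t] by simp
  qed
  have "((\<lambda>t. q (\<xi> + t *s w)) \<longlongrightarrow> d) (at (0::complex))"
    using tendsto_eventually[OF ev] .
  then show "q \<xi> = d" using t1 tendsto_unique[OF trivial_limit_at] by blast
qed

lemma (in bas) dpart_lin:
  assumes i: "i < CARD('n)"
  shows "dpart b eps g i (lin u) = (\<lambda>_. dualc b g i u)"
proof (cases "eps g i = 1")
  case True
  show ?thesis
  proof
    fix \<xi>
    have "((\<lambda>t. lin u \<xi> + t * lin u (dualvec b g i)) has_field_derivative lin u (dualvec b g i)) (at 0)"
      by (auto intro!: derivative_eq_intros)
    then have "deriv (\<lambda>t. lin u (\<xi> + t *s dualvec b g i)) 0 = lin u (dualvec b g i)"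
      unfolding lin_argadd by (rule DERIV_imp_deriv)
    then show "dpart b eps g i (lin u) \<xi> = dualc b g i u"
      unfolding dpart_def using True lin_dualvec by simp
  qed
next
  case False
  define v where "v = b g i"
  define e where "e = eps g i"
  have e1: "e - 1 \<noteq> 0" using False e_def by simp
  have A: "act (smap b eps g i) (lin w) \<xi> = lin w \<xi> + (e - 1) * dualc b g i w * lin v \<xi>" for w \<xi>
    unfolding act_lin smap_apply lin_add lin_scale v_def e_def ..
  have v0: "v \<noteq> 0"
  proof
    assume "v = 0"
    then have "0 \<in> b g ` {..<CARD('n)}" using i v_def by auto
    from vec.dependent_zero[OF this] show False using ind by simp
  qed
  have dv: "dualc b g i v = 1" using dualc_self[OF i] v_def by simp
  have iff: "(q \<xi> * (lin v \<xi> - act (smap b eps g i) (lin v) \<xi>) = lin u \<xi> - act (smap b eps g i) (lin u) \<xi>)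
        \<longleftrightarrow> (q \<xi> - dualc b g i u) * lin v \<xi> = 0" for q \<xi>
  proof -
    have "(q \<xi> * (lin v \<xi> - act (smap b eps g i) (lin v) \<xi>) = lin u \<xi> - act (smap b eps g i) (lin u) \<xi>)
       \<longleftrightarrow> (e - 1) * ((q \<xi> - dualc b g i u) * lin v \<xi>) = 0"
      unfolding A dv by (auto simp: algebra_simps)
    then show ?thesis using e1 by simp
  qed
  have "(THE q. q \<in> SV \<and> (\<forall>\<xi>. q \<xi> * (lin v \<xi> - act (smap b eps g i) (lin v) \<xi>)
                     = lin u \<xi> - act (smap b eps g i) (lin u) \<xi>)) = (\<lambda>_. dualc b g i u)"
    unfolding iff
  proof (rule the_equality)
    show "(\<lambda>_. dualc b g i u) \<in> SV \<and> (\<forall>\<xi>. (dualc b g i u - dualc b g i u) * lin v \<xi> = 0)"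
      by (simp add: SV_const)
    show "\<And>q. q \<in> SV \<and> (\<forall>\<xi>. (q \<xi> - dualc b g i u) * lin v \<xi> = 0) \<Longrightarrow> q = (\<lambda>_. dualc b g i u)"
      using uniq_SV v0 by blast
  qed
  then show ?thesis unfolding dpart_def v_def using False by simp
qed


lemma act_const: "act M (\<lambda>_. x) = (\<lambda>_. x)"
  unfolding act_def ..

lemma nth_in_J:
  assumes "J \<subseteq> {..<(N::nat)}" "card J = p" "k < p"
  shows "sorted_list_of_set J ! k < N"
proof -
  have f: "finite J" using assms(1) finite_subset by blast
  have "sorted_list_of_set J ! k \<in> set (sorted_list_of_set J)"
    using assms f by (intro nth_mem) simp
  then show ?thesis using f assms(1) by auto
qed

theorem proposition5p3:
  fixes G :: "(complex^'n^'n) set"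
    and b :: "complex^'n^'n \<Rightarrow> nat \<Rightarrow> complex^'n"
    and eps :: "complex^'n^'n \<Rightarrow> nat \<Rightarrow> complex"
    and c :: "complex^'n^'n \<Rightarrow> nat set \<Rightarrow> (complex^'n \<Rightarrow> complex)"
    and p :: nat
    and us :: "nat \<Rightarrow> complex^'n"
  assumes "finite G"
    and "mat 1 \<in> G"
    and "\<forall>g\<in>G. \<forall>h\<in>G. g ** h \<in> G"
    and "\<forall>g\<in>G. invertible g"
    and "\<forall>g\<in>G. inj_on (b g) {..<CARD('n)} \<and> vec.independent (b g ` {..<CARD('n)})"
    and "\<forall>g\<in>G. \<forall>i<CARD('n). g *v b g i = eps g i *s b g i"
    and "\<forall>g\<in>G. \<forall>J. c g J \<in> SV"
  shows "PhiStar p (Upsilon b eps G c p) us = alpha_eval b G c p us"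
proof (intro ext)
  fix h \<xi>
  let ?Js = "{J. J \<subseteq> {..<CARD('n)} \<and> card J = p}"
  let ?Ps = "{\<pi>. \<pi> permutes {..<p}}"
  show "PhiStar p (Upsilon b eps G c p) us h \<xi> = alpha_eval b G c p us h \<xi>"
  proof (cases "h \<in> G")
    case False
    then show ?thesis unfolding PhiStar_def Upsilon_def alpha_eval_def by simp
  next
    case True
    interpret bas b h using assms(5) True by unfold_locales auto
    have key: "act (prefix b eps h (sorted_list_of_set J ! k))
                    (dpart b eps h (sorted_list_of_set J ! k) (lin w)) \<xi>
             = dualc b h (sorted_list_of_set J ! k) w" if "J \<in> ?Js" "k < p" for J k w
      using dpart_lin[OF nth_in_J[of J "CARD('n)" p k]] that by (simp add: act_const)
    have "PhiStar p (Upsilon b eps G c p) us h \<xi> =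
       (\<Sum>\<pi>\<in>?Ps. (sign \<pi> :: complex) * (\<Sum>J\<in>?Js.
          (\<Prod>k<p. dualc b h (sorted_list_of_set J ! k) (us (\<pi> k))) * c h J \<xi>))"
      unfolding PhiStar_def Upsilon_def using True
      by (auto intro!: sum.cong arg_cong2[where f="(*)"] prod.cong simp: key)
    also have "\<dots> = (\<Sum>J\<in>?Js. (\<Sum>\<pi>\<in>?Ps. (sign \<pi> :: complex) *
          (\<Prod>k<p. dualc b h (sorted_list_of_set J ! k) (us (\<pi> k)))) * c h J \<xi>)"
      by (simp add: sum_distrib_left sum_distrib_right mult.assoc sum.swap[of _ ?Ps])
    also have "\<dots> = alpha_eval b G c p us h \<xi>"
      unfolding alpha_eval_def using True by simp
    finally show ?thesis .
  qed
qed

end
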